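(* Let $k \ge 2$ be an integer. If $G$ is a twin-free graph with $n$ vertices and $i_{\max}(G) = k$, then $n \le 2^{k-1}+k-1$. Furthermore, equality holds only if the graph $G$ is formed by taking a clique $K_{k-1}$ and adding, for every vertex subset $S$ of this clique, a vertex whose neighbourhood is precisely $S$.
   Context: $i_{\max}(G)$ denotes the number of maximal independent sets of $G$. A graph is twin-free if no two vertices have the same open neighbourhood. *)

theory Defs
  imports Main
begin

definition simple_graph :: "'a set \<Rightarrow> ('a \<Rightarrow> 'a \<Rightarrow> bool) \<Rightarrow> bool" where
  "simple_graph V E \<longleftrightarrow> finite V \<and> (\<forall>u v. E u v \<longrightarrow> u \<in> V \<and> v \<in> V)
     \<and> (\<forall>u v. E u v \<longrightarrow> E v u) \<and> (\<forall>v. \<not> E v v)"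

definition nbhd :: "'a set \<Rightarrow> ('a \<Rightarrow> 'a \<Rightarrow> bool) \<Rightarrow> 'a \<Rightarrow> 'a set" where
  "nbhd V E v = {w \<in> V. E v w}"

definition independent_set :: "'a set \<Rightarrow> ('a \<Rightarrow> 'a \<Rightarrow> bool) \<Rightarrow> 'a set \<Rightarrow> bool" where
  "independent_set V E S \<longleftrightarrow> S \<subseteq> V \<and> (\<forall>u\<in>S. \<forall>v\<in>S. \<not> E u v)"

definition maximal_independent_set :: "'a set \<Rightarrow> ('a \<Rightarrow> 'a \<Rightarrow> bool) \<Rightarrow> 'a set \<Rightarrow> bool" where
  "maximal_independent_set V E S \<longleftrightarrow> independent_set V E S \<and>
     (\<forall>T. independent_set V E T \<and> S \<subseteq> T \<longrightarrow> T = S)"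

definition i_max :: "'a set \<Rightarrow> ('a \<Rightarrow> 'a \<Rightarrow> bool) \<Rightarrow> nat" where
  "i_max V E = card {S. maximal_independent_set V E S}"

definition twin_free :: "'a set \<Rightarrow> ('a \<Rightarrow> 'a \<Rightarrow> bool) \<Rightarrow> bool" where
  "twin_free V E \<longleftrightarrow> (\<forall>u\<in>V. \<forall>v\<in>V. u \<noteq> v \<longrightarrow> nbhd V E u \<noteq> nbhd V E v)"

definition graph_iso :: "'a set \<Rightarrow> ('a \<Rightarrow> 'a \<Rightarrow> bool) \<Rightarrow> 'b set \<Rightarrow> ('b \<Rightarrow> 'b \<Rightarrow> bool) \<Rightarrow> bool" where
  "graph_iso V E W F \<longleftrightarrow> (\<exists>f. bij_betw f V W \<and> (\<forall>u\<in>V. \<forall>v\<in>V. E u v \<longleftrightarrow> F (f u) (f v)))"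

text \<open>The extremal graph: a clique on Inl 0, ..., Inl (k-2) together with, for every
subset S of the clique, a vertex Inr S whose neighbourhood is exactly S.\<close>

definition ext_V :: "nat \<Rightarrow> (nat + nat set) set" where
  "ext_V k = Inl ` {..<k-1} \<union> Inr ` Pow {..<k-1}"

fun ext_E_raw :: "(nat + nat set) \<Rightarrow> (nat + nat set) \<Rightarrow> bool" where
  "ext_E_raw (Inl i) (Inl j) = (i \<noteq> j)"
| "ext_E_raw (Inl i) (Inr S) = (i \<in> S)"
| "ext_E_raw (Inr S) (Inl i) = (i \<in> S)"
| "ext_E_raw (Inr S) (Inr T) = False"

definition ext_E :: "nat \<Rightarrow> (nat + nat set) \<Rightarrow> (nat + nat set) \<Rightarrow> bool" where
  "ext_E k u v \<longleftrightarrow> u \<in> ext_V k \<and> v \<in> ext_V k \<and> ext_E_raw u v"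

end

theory Submission
  imports Defs
begin

definition symd :: "'a set \<Rightarrow> 'a set \<Rightarrow> 'a set" where
  "symd X Y = (X - Y) \<union> (Y - X)"

locale hfam =
  fixes U :: "'u set" and F :: "'u set set"
  assumes finU: "finite U" and FU: "\<And>A. A \<in> F \<Longrightarrow> A \<subseteq> U" and ne: "{} \<notin> F"
  and helly: "\<And>I. I \<subseteq> F \<Longrightarrow> (\<forall>A\<in>I. \<forall>B\<in>I. A \<inter> B \<noteq> {}) \<Longrightarrow> \<exists>u\<in>U. \<forall>A\<in>I. u \<in> A"
begin

lemma finF: "finite F"
proof -
  have "F \<subseteq> Pow U" using FU by blast
  thus ?thesis using finU finite_subset by blast
qed

definition pr :: "'u set set \<Rightarrow> 'u \<Rightarrow> 'u set set" where
  "pr Q u = {A\<in>Q. u \<in> A}"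

lemma dist_step:
  assumes QF: "Q \<subseteq> F" and cl: "\<forall>C\<in>Q. U - C \<in> Q"
    and uvw: "u \<in> U" "v \<in> U" "w \<in> U" and AB: "A \<in> Q" "B \<in> Q"
    and "u \<in> A" "u \<in> B" "v \<notin> A" "v \<notin> B" "w \<in> A" "w \<notin> B"
  shows "\<exists>z\<in>U. pr Q z \<noteq> pr Q u \<and> pr Q z \<noteq> pr Q v \<and>
           card (symd (pr Q z) (pr Q u)) < card (symd (pr Q u) (pr Q v))"
proof -
  define I where "I = {C\<in>Q. (u\<in>C \<and> v\<in>C) \<or> (u\<in>C \<and> w\<in>C) \<or> (v\<in>C \<and> w\<in>C)}"
  have "I \<subseteq> F" using QF I_def by blast
  moreover have "\<forall>C\<in>I. \<forall>D\<in>I. C \<inter> D \<noteq> {}" unfolding I_def by blast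
  ultimately obtain z where z: "z \<in> U" "\<forall>C\<in>I. z \<in> C" using helly by blast
  have prz: "pr Q z = I"
  proof
    show "I \<subseteq> pr Q z" using z unfolding pr_def I_def by blast
  next
    show "pr Q z \<subseteq> I"
    proof
      fix C assume C: "C \<in> pr Q z"
      show "C \<in> I"
      proof (rule ccontr)
        assume "C \<notin> I"
        hence "U - C \<in> I" using C cl uvw unfolding I_def pr_def by auto
        hence "z \<in> U - C" using z by blast
        thus False using C unfolding pr_def by blast
      qed
    qed
  qed
  have "U - B \<in> I" using cl AB assms uvw unfolding I_def by auto
  hence "U - B \<in> pr Q z" using prz by simp
  moreover have "U - B \<notin> pr Q u" unfolding pr_def using \<open>u \<in> B\<close> by blast
  ultimately have n1: "pr Q z \<noteq> pr Q u" by metis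
  have "A \<in> I" using AB assms unfolding I_def by auto
  hence "A \<in> pr Q z" using prz by simp
  moreover have "A \<notin> pr Q v" unfolding pr_def using \<open>v \<notin> A\<close> by blast
  ultimately have n2: "pr Q z \<noteq> pr Q v" by metis
  have sub: "symd (pr Q z) (pr Q u) \<subseteq> symd (pr Q u) (pr Q v)"
    using prz unfolding symd_def pr_def I_def by blast
  have "A \<in> symd (pr Q u) (pr Q v)" "A \<notin> symd (pr Q z) (pr Q u)"
    using AB assms prz \<open>A \<in> I\<close> unfolding symd_def pr_def by auto
  hence "symd (pr Q z) (pr Q u) \<subset> symd (pr Q u) (pr Q v)" using sub by blast
  moreover have "finite (symd (pr Q u) (pr Q v))"
  proof -
    have "symd (pr Q u) (pr Q v) \<subseteq> F" unfolding symd_def pr_def using QF by blast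
    thus ?thesis using finF finite_subset by blast
  qed
  ultimately have "card (symd (pr Q z) (pr Q u)) < card (symd (pr Q u) (pr Q v))"
    by (simp add: psubset_card_mono)
  thus ?thesis using z n1 n2 by blast
qed

lemma Une: "U \<noteq> {}"
  using helly[of "{}"] by blast

lemma dist1:
  assumes QF: "Q \<subseteq> F" and cl: "\<forall>C\<in>Q. U - C \<in> Q" and Qne: "Q \<noteq> {}"
  shows "\<exists>u\<in>U. \<exists>v\<in>U. \<exists>A\<in>Q. pr Q u \<noteq> pr Q v \<and> pr Q u - {A, U-A} = pr Q v - {A, U-A}"
proof -
  obtain A0 where A0: "A0 \<in> Q" using Qne by blast
  have "A0 \<in> F" "U - A0 \<in> F" using A0 QF cl by blast+
  hence "A0 \<noteq> {}" "U - A0 \<noteq> {}" using ne by metis+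
  then obtain u0 v0 where uv0: "u0 \<in> A0" "v0 \<in> U - A0" by blast
  have u0U: "u0 \<in> U" using uv0 A0 QF FU by blast
  have "pr Q u0 \<noteq> pr Q v0" using uv0 A0 unfolding pr_def by blast
  define P where "P = (\<lambda>(u,v). u\<in>U \<and> v\<in>U \<and> pr Q u \<noteq> pr Q v)"
  define m where "m = (\<lambda>(u,v). card (symd (pr Q u) (pr Q v)))"
  have "P (u0,v0)" using uv0 u0U \<open>pr Q u0 \<noteq> pr Q v0\<close> unfolding P_def by auto
  from ex_has_least_nat[of P "(u0,v0)" m, OF this] obtain p where
    p: "P p" "\<forall>y. P y \<longrightarrow> m p \<le> m y" by blast
  obtain u v where puv: "p = (u,v)" by (cases p)
  have uv: "u \<in> U" "v \<in> U" "pr Q u \<noteq> pr Q v" using p(1) puv unfolding P_def by auto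
  have min: "\<And>u' v'. u'\<in>U \<Longrightarrow> v'\<in>U \<Longrightarrow> pr Q u' \<noteq> pr Q v' \<Longrightarrow>
     card (symd (pr Q u) (pr Q v)) \<le> card (symd (pr Q u') (pr Q v'))"
  proof -
    fix u' v' assume "u'\<in>U" "v'\<in>U" "pr Q u' \<noteq> pr Q v'"
    hence "P (u',v')" unfolding P_def by auto
    hence "m p \<le> m (u',v')" using p(2) by blast
    thus "card (symd (pr Q u) (pr Q v)) \<le> card (symd (pr Q u') (pr Q v'))"
      using puv unfolding m_def by simp
  qed
  have sep: "\<And>x y. pr Q x \<noteq> pr Q y \<Longrightarrow> x \<in> U \<Longrightarrow> y \<in> U \<Longrightarrow>
       \<exists>C\<in>Q. x \<in> C \<and> y \<notin> C"
  proof -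
    fix x y assume "pr Q x \<noteq> pr Q y" "x \<in> U" "y \<in> U"
    then obtain C where C: "C \<in> Q" "(x \<in> C \<and> y \<notin> C) \<or> (y \<in> C \<and> x \<notin> C)"
      unfolding pr_def by blast
    show "\<exists>C\<in>Q. x \<in> C \<and> y \<notin> C"
    proof (cases "x \<in> C")
      case True thus ?thesis using C by blast
    next
      case False thus ?thesis using C cl \<open>x \<in> U\<close> by blast
    qed
  qed
  obtain A where A: "A \<in> Q" "u \<in> A" "v \<notin> A" using sep uv by blast
  have AU: "A \<subseteq> U" using A QF FU by blast
  show ?thesis
  proof (rule ccontr)
    assume nt: "\<not> ?thesis"
    have neq: "pr Q u - {A, U-A} \<noteq> pr Q v - {A, U-A}"
    proof
      assume "pr Q u - {A, U-A} = pr Q v - {A, U-A}"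
      hence "\<exists>u\<in>U. \<exists>v\<in>U. \<exists>A\<in>Q. pr Q u \<noteq> pr Q v \<and> pr Q u - {A, U-A} = pr Q v - {A, U-A}"
        using uv A(1) by blast
      thus False using nt by blast
    qed
    then obtain B0 where "B0 \<in> symd (pr Q u - {A, U-A}) (pr Q v - {A, U-A})"
      unfolding symd_def by blast
    hence B0: "B0 \<in> Q" "B0 \<noteq> A" "B0 \<noteq> U - A" "(u \<in> B0) \<noteq> (v \<in> B0)"
      unfolding symd_def pr_def by auto
    have B0U: "B0 \<subseteq> U" using B0 QF FU by blast
    obtain B where B: "B \<in> Q" "B \<noteq> A" "B \<noteq> U - A" "u \<in> B" "v \<notin> B" "B \<subseteq> U"
    proof (cases "u \<in> B0")
      case True thus ?thesis using that B0 B0U by blast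
    next
      case False
      have "U - B0 \<noteq> A" using B0 B0U AU by blast
      moreover have "U - B0 \<noteq> U - A" using B0 B0U AU by blast
      moreover have "U - B0 \<in> Q" using B0 cl by blast
      ultimately show ?thesis using that[of "U - B0"] B0(4) False uv(1) by blast
    qed
    have "\<exists>w\<in>U. (w \<in> A \<and> w \<notin> B) \<or> (w \<notin> A \<and> w \<in> B)"
    proof (rule ccontr)
      assume "\<not> ?thesis"
      hence "\<forall>w\<in>U. w \<in> A \<longleftrightarrow> w \<in> B" by blast
      hence "A = B" using AU B(6) by blast
      thus False using B(2) by simp
    qed
    then obtain w where w: "w \<in> U" "(w \<in> A \<and> w \<notin> B) \<or> (w \<notin> A \<and> w \<in> B)" by blast
    obtain z where z: "z \<in> U" "pr Q z \<noteq> pr Q u"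
        "card (symd (pr Q z) (pr Q u)) < card (symd (pr Q u) (pr Q v))"
    proof (cases "w \<in> A")
      case True
      have "\<exists>z\<in>U. pr Q z \<noteq> pr Q u \<and> pr Q z \<noteq> pr Q v \<and>
           card (symd (pr Q z) (pr Q u)) < card (symd (pr Q u) (pr Q v))"
        by (rule dist_step[OF QF cl uv(1,2) w(1) A(1) B(1)]) (use A B w True in auto)
      thus ?thesis using that by blast
    next
      case False
      have "\<exists>z\<in>U. pr Q z \<noteq> pr Q u \<and> pr Q z \<noteq> pr Q v \<and>
           card (symd (pr Q z) (pr Q u)) < card (symd (pr Q u) (pr Q v))"
        by (rule dist_step[OF QF cl uv(1,2) w(1) B(1) A(1)]) (use A B w False in auto)
      thus ?thesis using that by blast
    qed
    thus False using min[of z u] uv by linarith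
  qed
qed

lemma pair_count:
  assumes "Q \<subseteq> F" and "\<forall>C\<in>Q. U - C \<in> Q"
  shows "card Q + 2 \<le> 2 * card (pr Q ` U)"
  using assms
proof (induction "card Q" arbitrary: Q rule: less_induct)
  case less
  show ?case
  proof (cases "Q = {}")
    case True
    hence "pr Q ` U = {{}}" using Une unfolding pr_def by auto
    thus ?thesis using True by simp
  next
    case False
    from dist1[OF less.prems False] obtain u v A where
      uvA: "u \<in> U" "v \<in> U" "A \<in> Q" "pr Q u \<noteq> pr Q v" "pr Q u - {A, U-A} = pr Q v - {A, U-A}"
      by metis
    have AF: "A \<in> F" using uvA(3) less.prems(1) by blast
    have AU: "A \<subseteq> U" "A \<noteq> {}" using AF FU ne by metis+
    have AUA: "A \<noteq> U - A"
    proof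
      assume eq: "A = U - A"
      obtain a where a: "a \<in> A" using AU(2) by blast
      have "A \<inter> (U - A) = {}" by blast
      hence "A \<inter> A = {}" by (simp only: eq[symmetric])
      thus False using a by blast
    qed
    have cA: "U - A \<in> Q" using uvA(3) less.prems(2) by blast
    define Q' where "Q' = Q - {A, U - A}"
    have finQ: "finite Q" using less.prems finF finite_subset by blast
    have cQ': "card Q = card Q' + 2"
    proof -
      have "{A, U-A} \<subseteq> Q" using uvA(3) cA by blast
      hence "card Q' = card Q - card {A, U-A}" unfolding Q'_def using finQ
        by (simp add: card_Diff_subset finite_subset)
      moreover have "card {A, U-A} = 2" using AUA by simp
      moreover have "card {A, U-A} \<le> card Q" using \<open>{A, U-A} \<subseteq> Q\<close> finQ card_mono by blast
      ultimately show ?thesis by linarith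
    qed
    have Q'F: "Q' \<subseteq> F" using less.prems Q'_def by blast
    have clQ': "\<forall>C\<in>Q'. U - C \<in> Q'"
    proof
      fix C assume C: "C \<in> Q'"
      hence CU: "C \<subseteq> U" using Q'F FU by blast
      have dd: "U - (U - C) = C" "U - (U - A) = A" using CU AU by blast+
      have "U - C \<in> Q" using C less.prems Q'_def by blast
      moreover have "U - C \<noteq> A" using C dd Q'_def by auto
      moreover have "U - C \<noteq> U - A" using C dd Q'_def by auto
      ultimately show "U - C \<in> Q'" unfolding Q'_def by blast
    qed
    have IH: "card Q' + 2 \<le> 2 * card (pr Q' ` U)"
      using less.hyps[of Q'] cQ' Q'F clQ' by simp
    define g where "g = (\<lambda>X. X - {A, U-A})"
    have "\<And>x. pr Q' x = g (pr Q x)" unfolding g_def pr_def Q'_def by auto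
    hence "pr Q' ` U = g ` (pr Q ` U)" by (simp add: image_image)
    moreover have "\<not> inj_on g (pr Q ` U)"
    proof
      assume inj: "inj_on g (pr Q ` U)"
      have "g (pr Q u) = g (pr Q v)" using uvA(5) g_def by simp
      hence "pr Q u = pr Q v" using inj uvA(1,2) by (meson image_eqI inj_onD)
      thus False using uvA(4) by simp
    qed
    moreover have "finite (pr Q ` U)" using finU by simp
    ultimately have "card (pr Q' ` U) < card (pr Q ` U)"
      using card_image_le[of "pr Q ` U" g] inj_on_iff_eq_card[of "pr Q ` U" g] by simp
    thus ?thesis using IH cQ' by linarith
  qed
qed


lemma card_St: assumes "x0 \<in> U" shows "card {A. A \<subseteq> U \<and> x0 \<in> A} = 2 ^ (card U - 1)"
proof -
  have eq: "{A. A \<subseteq> U \<and> x0 \<in> A} = insert x0 ` Pow (U - {x0})"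
  proof
    show "{A. A \<subseteq> U \<and> x0 \<in> A} \<subseteq> insert x0 ` Pow (U - {x0})"
    proof
      fix A assume A: "A \<in> {A. A \<subseteq> U \<and> x0 \<in> A}"
      hence "A = insert x0 (A - {x0})" by blast
      moreover have "A - {x0} \<in> Pow (U - {x0})" using A by blast
      ultimately show "A \<in> insert x0 ` Pow (U - {x0})" by blast
    qed
  next
    show "insert x0 ` Pow (U - {x0}) \<subseteq> {A. A \<subseteq> U \<and> x0 \<in> A}" using assms by blast
  qed
  have inj: "inj_on (insert x0) (Pow (U - {x0}))"
    unfolding inj_on_def by blast
  have "card {A. A \<subseteq> U \<and> x0 \<in> A} = card (Pow (U - {x0}))"
    using eq inj card_image by metis
  also have "\<dots> = 2 ^ card (U - {x0})" using finU card_Pow by blast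
  also have "card (U - {x0}) = card U - 1" using assms finU by simp
  finally show ?thesis .
qed

lemma compl_inj: "inj_on (\<lambda>A. U - A) F"
proof (rule inj_onI)
  fix A B assume "A \<in> F" "B \<in> F" "U - A = U - B"
  moreover have "A \<subseteq> U" "B \<subseteq> U" using \<open>A \<in> F\<close> \<open>B \<in> F\<close> FU by blast+
  ultimately show "A = B" by (metis Diff_Diff_Int Int_absorb1)
qed

lemma pairs_in:
  assumes "x0 \<in> U"
  shows "card {A\<in>F. x0 \<in> A \<and> U - A \<in> F} + 1 \<le> card U"
proof -
  define Q where "Q = {A\<in>F. U - A \<in> F}"
  define Pd where "Pd = {A\<in>F. x0 \<in> A \<and> U - A \<in> F}"
  have QF: "Q \<subseteq> F" unfolding Q_def by blast
  have cl: "\<forall>C\<in>Q. U - C \<in> Q"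
  proof
    fix C assume C: "C \<in> Q"
    hence "C \<subseteq> U" using FU Q_def by blast
    hence "U - (U - C) = C" by blast
    thus "U - C \<in> Q" using C unfolding Q_def by simp
  qed
  have "card Q + 2 \<le> 2 * card (pr Q ` U)" by (rule pair_count[OF QF cl])
  moreover have "card (pr Q ` U) \<le> card U" using finU card_image_le by blast
  ultimately have c1: "card Q + 2 \<le> 2 * card U" by linarith
  define Po where "Po = {A\<in>Q. x0 \<notin> A}"
  have "Q = Pd \<union> Po" "Pd \<inter> Po = {}" unfolding Q_def Pd_def Po_def by blast+
  moreover have "finite Q" using QF finF finite_subset by blast
  ultimately have c2: "card Q = card Pd + card Po"
    by (metis card_Un_disjoint finite_Un)
  have "Po = (\<lambda>A. U - A) ` Pd"
  proof
    show "Po \<subseteq> (\<lambda>A. U - A) ` Pd"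
    proof
      fix A assume A: "A \<in> Po"
      hence AU: "A \<subseteq> U" using FU Po_def Q_def by blast
      hence "A = U - (U - A)" by blast
      moreover have "U - A \<in> Pd" using A AU assms unfolding Po_def Q_def Pd_def
        by (auto simp: double_diff)
      ultimately show "A \<in> (\<lambda>A. U - A) ` Pd" by blast
    qed
  next
    show "(\<lambda>A. U - A) ` Pd \<subseteq> Po"
    proof
      fix B assume "B \<in> (\<lambda>A. U - A) ` Pd"
      then obtain A where A: "A \<in> Pd" "B = U - A" by blast
      have AU: "A \<subseteq> U" using FU A(1) unfolding Pd_def by blast
      have UB: "U - B = A" using A(2) AU by (simp add: Diff_Diff_Int Int_absorb1)
      have "B \<in> F" "x0 \<notin> B" using A unfolding Pd_def by simp_all
      moreover have "U - B \<in> F" using UB A(1) unfolding Pd_def by simp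
      ultimately show "B \<in> Po" unfolding Po_def Q_def by simp
    qed
  qed
  moreover have "inj_on (\<lambda>A. U - A) Pd" by (rule inj_on_subset[OF compl_inj]) (auto simp: Pd_def)
  hence "card ((\<lambda>A. U - A) ` Pd) = card Pd" by (rule card_image)
  ultimately have "card Po = card Pd" by simp
  thus ?thesis using c1 c2 unfolding Pd_def by linarith
qed

lemma bound_complete:
  assumes x0: "x0 \<in> U"
  shows "card F \<le> 2 ^ (card U - 1) + (card U - 1) \<and>
    (card F = 2 ^ (card U - 1) + (card U - 1) \<longrightarrow> (\<forall>A. A \<subseteq> U \<longrightarrow> A \<in> F \<or> U - A \<in> F))"
proof -
  define Fin where "Fin = {A\<in>F. x0 \<in> A}"
  define Fout where "Fout = {A\<in>F. x0 \<notin> A}"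
  define cF where "cF = (\<lambda>A. U - A) ` Fout"
  define St where "St = {A. A \<subseteq> U \<and> x0 \<in> A}"
  define Pd where "Pd = {A\<in>F. x0 \<in> A \<and> U - A \<in> F}"
  have "St \<subseteq> Pow U" unfolding St_def by blast
  hence finSt: "finite St" using finU finite_subset by blast
  have FE: "F = Fin \<union> Fout" and FD: "Fin \<inter> Fout = {}" unfolding Fin_def Fout_def by blast+
  have "finite Fin" "finite Fout" unfolding Fin_def Fout_def using finF by simp_all
  hence "card (Fin \<union> Fout) = card Fin + card Fout" using FD by (rule card_Un_disjoint)
  hence c1: "card F = card Fin + card Fout" using FE by simp
  have "inj_on (\<lambda>A. U - A) Fout" by (rule inj_on_subset[OF compl_inj]) (auto simp: Fout_def)
  hence c2: "card cF = card Fout" unfolding cF_def by (rule card_image)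
  have finFin: "finite Fin" "finite cF" unfolding cF_def using \<open>finite Fin\<close> \<open>finite Fout\<close> by simp_all
  have c3: "card Fin + card cF = card (Fin \<union> cF) + card (Fin \<inter> cF)"
    using card_Un_Int finFin by blast
  have sub1: "Fin \<inter> cF \<subseteq> Pd"
  proof
    fix A assume A: "A \<in> Fin \<inter> cF"
    then obtain B where B: "B \<in> Fout" "A = U - B" unfolding cF_def by blast
    have "B \<subseteq> U" using B(1) FU unfolding Fout_def by blast
    hence UA: "U - A = B" using B(2) by (simp add: Diff_Diff_Int Int_absorb1)
    have "A \<in> F" "x0 \<in> A" using A unfolding Fin_def by simp_all
    moreover have "U - A \<in> F" using UA B(1) unfolding Fout_def by simp
    ultimately show "A \<in> Pd" unfolding Pd_def by simp
  qed
  have sub2: "Fin \<union> cF \<subseteq> St"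
    unfolding Fin_def cF_def Fout_def St_def using FU x0 by blast
  have c4: "card Pd + 1 \<le> card U" unfolding Pd_def by (rule pairs_in[OF x0])
  have c5: "card (Fin \<inter> cF) \<le> card Pd"
    using sub1 card_mono finF unfolding Pd_def by (metis (no_types, lifting) finite_subset mem_Collect_eq subsetI)
  have c6: "card (Fin \<union> cF) \<le> card St" using sub2 card_mono finSt by blast
  have cSt: "card St = 2 ^ (card U - 1)" unfolding St_def by (rule card_St[OF x0])
  have part1: "card F \<le> 2 ^ (card U - 1) + (card U - 1)"
    using c1 c2 c3 c4 c5 c6 cSt by linarith
  moreover have "(\<forall>A. A \<subseteq> U \<longrightarrow> A \<in> F \<or> U - A \<in> F)"
    if eq: "card F = 2 ^ (card U - 1) + (card U - 1)"
  proof -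
    have "card St \<le> card (Fin \<union> cF)" using eq c1 c2 c3 c4 c5 c6 cSt by linarith
    hence StE: "Fin \<union> cF = St" by (rule card_seteq[OF finSt sub2])
    show ?thesis
    proof (intro allI impI)
      fix A assume AU: "A \<subseteq> U"
      show "A \<in> F \<or> U - A \<in> F"
      proof (cases "x0 \<in> A")
        case True
        hence "A \<in> Fin \<union> cF" unfolding StE St_def using AU by simp
        thus ?thesis
        proof
          assume "A \<in> Fin" thus ?thesis unfolding Fin_def by blast
        next
          assume "A \<in> cF"
          then obtain B where B: "B \<in> Fout" "A = U - B" unfolding cF_def by blast
          have "B \<subseteq> U" using B(1) FU unfolding Fout_def by blast
          hence "U - A = B" using B(2) by (simp add: Diff_Diff_Int Int_absorb1)
          thus ?thesis using B(1) unfolding Fout_def by simp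
        qed
      next
        case False
        hence "U - A \<in> Fin \<union> cF" unfolding StE St_def using x0 by simp
        thus ?thesis
        proof
          assume "U - A \<in> Fin" thus ?thesis unfolding Fin_def by blast
        next
          assume "U - A \<in> cF"
          then obtain B where B: "B \<in> Fout" "U - A = U - B" unfolding cF_def by blast
          have "B \<subseteq> U" using B(1) FU unfolding Fout_def by blast
          hence "A = B" using B(2) AU by (metis Diff_Diff_Int Int_absorb1)
          thus ?thesis using B(1) unfolding Fout_def by simp
        qed
      qed
    qed
  qed
  ultimately show ?thesis by blast
qed


lemma tri:
  assumes "S \<in> F" "T \<in> F" "X \<in> F" "s \<in> S" "s \<in> T" "t \<in> S" "t \<in> X" "r \<in> T" "r \<in> X"
    and none: "\<And>y. y \<in> S \<Longrightarrow> y \<in> T \<Longrightarrow> y \<in> X \<Longrightarrow> False"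
  shows False
proof -
  have "{S,T,X} \<subseteq> F" using assms(1-3) by simp
  moreover have "\<forall>C\<in>{S,T,X}. \<forall>D\<in>{S,T,X}. C \<inter> D \<noteq> {}" using assms(4-9) by blast
  ultimately obtain y where "y \<in> U" "\<forall>C\<in>{S,T,X}. y \<in> C" using helly by metis
  thus False using none by blast
qed

lemma two_elems:
  assumes "finite A" "2 \<le> card A"
  obtains a b where "a \<in> A" "b \<in> A" "a \<noteq> b"
proof -
  have "\<not> card A \<le> Suc 0" using assms(2) by simp
  hence "\<not> (\<forall>a\<in>A. \<forall>b\<in>A. a = b)" using card_le_Suc0_iff_eq[OF assms(1)] by simp
  thus ?thesis using that by blast
qed

lemma struct:
  assumes comp: "\<forall>A. A \<subseteq> U \<longrightarrow> A \<in> F \<or> U - A \<in> F"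
  shows "\<exists>x\<in>U. \<forall>A\<in>F. 2 \<le> card A \<longrightarrow> x \<in> A"
proof -
  define L where "L = {A\<in>F. 2 \<le> card A}"
  have "\<forall>A\<in>L. \<forall>B\<in>L. A \<inter> B \<noteq> {}"
  proof (intro ballI notI)
    fix A B assume AL: "A \<in> L" and BL: "B \<in> L" and AB: "A \<inter> B = {}"
    have AF: "A \<in> F" and BF: "B \<in> F" using AL BL L_def by simp_all
    have AU: "A \<subseteq> U" and BU: "B \<subseteq> U" using AF BF FU by simp_all
    have "finite A" "finite B" using AU BU finU finite_subset by blast+
    obtain a1 a2 where a: "a1 \<in> A" "a2 \<in> A" "a1 \<noteq> a2"
      using two_elems[OF \<open>finite A\<close>] AL L_def by blast
    obtain b1 b2 where b: "b1 \<in> B" "b2 \<in> B" "b1 \<noteq> b2"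
      using two_elems[OF \<open>finite B\<close>] BL L_def by blast
    have nb: "a1 \<notin> B" "a2 \<notin> B" "b1 \<notin> A" "b2 \<notin> A" using a b AB by blast+
    have inU: "a1 \<in> U" "a2 \<in> U" "b1 \<in> U" "b2 \<in> U" using a b AU BU by blast+
    define S0 where "S0 = (U - B - {a2}) \<union> {b1}"
    define T0 where "T0 = U - {a2, b1}"
    have "S0 \<subseteq> U" "T0 \<subseteq> U" unfolding S0_def T0_def using inU by blast+
    hence cS: "S0 \<in> F \<or> U - S0 \<in> F" and cT: "T0 \<in> F \<or> U - T0 \<in> F" using comp by blast+
    show False
    proof (cases "S0 \<in> F")
      case S: True
      show False
      proof (cases "T0 \<in> F")
        case True
        show False
          by (rule tri[of S0 T0 B a1 b1 b2]) (use S True BF a b nb inU AB in \<open>auto simp: S0_def T0_def\<close>)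
      next
        case False
        hence T: "U - T0 \<in> F" using cT by simp
        show False
          by (rule tri[of S0 "U - T0" A b1 a1 a2]) (use S T AF a b nb inU AB in \<open>auto simp: S0_def T0_def\<close>)
      qed
    next
      case False
      hence S: "U - S0 \<in> F" using cS by simp
      show False
      proof (cases "T0 \<in> F")
        case True
        show False
          by (rule tri[of "U - S0" T0 A b2 a2 a1]) (use S True AF a b nb inU AB in \<open>auto simp: S0_def T0_def\<close>)
      next
        case False
        hence T: "U - T0 \<in> F" using cT by simp
        show False
          by (rule tri[of "U - S0" "U - T0" B a2 b2 b1]) (use S T BF a b nb inU AB in \<open>auto simp: S0_def T0_def\<close>)
      qed
    qed
  qed
  moreover have "L \<subseteq> F" unfolding L_def by blast
  ultimately obtain x where "x \<in> U" "\<forall>A\<in>L. x \<in> A" using helly by metis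
  thus ?thesis unfolding L_def by blast
qed

lemma extremal:
  assumes x0: "x0 \<in> U" and eq: "card F = 2 ^ (card U - 1) + (card U - 1)"
  shows "\<exists>x\<in>U. F = {A. A \<subseteq> U \<and> x \<in> A} \<union> (\<lambda>i. {i}) ` (U - {x})"
proof -
  have comp: "\<forall>A. A \<subseteq> U \<longrightarrow> A \<in> F \<or> U - A \<in> F" using bound_complete[OF x0] eq by blast
  obtain x where x: "x \<in> U" "\<forall>A\<in>F. 2 \<le> card A \<longrightarrow> x \<in> A" using struct[OF comp] by blast
  define St where "St = {A. A \<subseteq> U \<and> x \<in> A}"
  define Sg where "Sg = (\<lambda>i. {i}) ` (U - {x})"
  have sub: "F \<subseteq> St \<union> Sg"
  proof
    fix A assume A: "A \<in> F"
    have AU: "A \<subseteq> U" and Ane: "A \<noteq> {}" using A FU ne by auto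
    have finA: "finite A" using AU finU finite_subset by blast
    show "A \<in> St \<union> Sg"
    proof (cases "2 \<le> card A")
      case True
      thus ?thesis using x A AU unfolding St_def by blast
    next
      case False
      moreover have "card A \<noteq> 0" using finA Ane by simp
      ultimately have "card A = 1" by linarith
      then obtain i where i: "A = {i}" using card_1_singletonE by blast
      show ?thesis
      proof (cases "i = x")
        case True thus ?thesis using i AU unfolding St_def by blast
      next
        case False thus ?thesis using i AU unfolding Sg_def by blast
      qed
    qed
  qed
  have finSt: "finite St" using finU unfolding St_def by (simp add: finite_subset[of _ "Pow U"] subset_iff)
  have finSg: "finite Sg" using finU unfolding Sg_def by simp
  have disj: "St \<inter> Sg = {}" unfolding St_def Sg_def by blast
  have cSt: "card St = 2 ^ (card U - 1)" unfolding St_def by (rule card_St[OF x(1)])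
  have "inj_on (\<lambda>i. {i}) (U - {x})" unfolding inj_on_def by blast
  hence "card Sg = card (U - {x})" unfolding Sg_def by (rule card_image)
  also have "\<dots> = card U - 1" using x(1) finU by simp
  finally have cSg: "card Sg = card U - 1" .
  have "card (St \<union> Sg) = card St + card Sg" using card_Un_disjoint[OF finSt finSg disj] .
  hence "card (St \<union> Sg) \<le> card F" using cSt cSg eq by simp
  hence "F = St \<union> Sg" using card_seteq[OF _ sub] finSt finSg by blast
  thus ?thesis using x(1) unfolding St_def Sg_def by blast
qed

end

lemma extend_mis:
  assumes sg: "simple_graph V E" and ind: "independent_set V E S"
  shows "\<exists>M. maximal_independent_set V E M \<and> S \<subseteq> M"
proof -
  define C where "C = {T. independent_set V E T \<and> S \<subseteq> T}"
  have "C \<subseteq> Pow V" unfolding C_def independent_set_def by blast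
  moreover have "finite V" using sg unfolding simple_graph_def by blast
  ultimately have finC: "finite C" using finite_subset by blast
  have "S \<in> C" using ind unfolding C_def by blast
  hence "C \<noteq> {}" by blast
  then obtain M where M: "M \<in> C" "\<forall>T\<in>C. M \<le> T \<longrightarrow> M = T"
    using finite_has_maximal[OF finC] by blast
  have "maximal_independent_set V E M"
    unfolding maximal_independent_set_def
  proof (intro conjI allI impI)
    show "independent_set V E M" using M(1) unfolding C_def by blast
  next
    fix T assume T: "independent_set V E T \<and> M \<subseteq> T"
    hence "T \<in> C" using M(1) unfolding C_def by blast
    thus "T = M" using M(2) T by blast
  qed
  thus ?thesis using M(1) unfolding C_def by blast
qed

lemma iso_build:
  assumes finM: "finite Ms" and xM: "x \<in> Ms" and cM: "card Ms = k"
  shows "\<exists>h. bij_betw h ({A. A \<subseteq> Ms \<and> x \<in> A} \<union> (\<lambda>i. {i}) ` (Ms - {x})) (ext_V k) \<and>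
    (\<forall>A\<in>{A. A \<subseteq> Ms \<and> x \<in> A} \<union> (\<lambda>i. {i}) ` (Ms - {x}).
     \<forall>B\<in>{A. A \<subseteq> Ms \<and> x \<in> A} \<union> (\<lambda>i. {i}) ` (Ms - {x}).
       (A \<inter> B = {}) = ext_E k (h A) (h B))"
proof -
  define R where "R = {A. A \<subseteq> Ms \<and> x \<in> A} \<union> (\<lambda>i. {i}) ` (Ms - {x})"
  have "card {..<k-1} = card (Ms - {x})" using cM xM finM by simp
  then obtain e where e: "bij_betw e {..<k-1} (Ms - {x})"
    using finite_same_card_bij finM by (metis finite_Diff finite_lessThan)
  define ei where "ei = inv_into {..<k-1} e"
  have ei: "bij_betw ei (Ms - {x}) {..<k-1}" using bij_betw_inv_into[OF e] ei_def by simp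
  have einj: "inj_on e {..<k-1}" using e bij_betw_imp_inj_on by blast
  have eimg: "e ` {..<k-1} = Ms - {x}" using e bij_betw_imp_surj_on by blast
  have eiinj: "inj_on ei (Ms - {x})" using ei bij_betw_imp_inj_on by blast
  have eiimg: "ei ` (Ms - {x}) = {..<k-1}" using ei bij_betw_imp_surj_on by blast
  have eie: "\<And>i. i < k - 1 \<Longrightarrow> ei (e i) = i" unfolding ei_def using einj by (simp add: inv_into_f_f)
  define h where "h A = (if x \<in> A then Inr (ei ` (Ms - A)) else Inl (ei (the_elem A)))" for A
  have Rchar: "\<And>A. A \<in> R \<Longrightarrow> (x \<in> A \<and> A \<subseteq> Ms) \<or> (\<exists>i\<in>Ms - {x}. A = {i})"
    unfolding R_def by blast
  have hSt: "\<And>A. x \<in> A \<Longrightarrow> h A = Inr (ei ` (Ms - A))" unfolding h_def by simp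
  have hSg: "\<And>i. i \<in> Ms - {x} \<Longrightarrow> h {i} = Inl (ei i)" unfolding h_def by auto
  have inR: "\<And>A. A \<in> R \<Longrightarrow> h A \<in> ext_V k"
  proof -
    fix A assume "A \<in> R"
    from Rchar[OF this] show "h A \<in> ext_V k"
    proof
      assume A: "x \<in> A \<and> A \<subseteq> Ms"
      have "Ms - A \<subseteq> Ms - {x}" using A by blast
      hence "ei ` (Ms - A) \<subseteq> {..<k-1}" using eiimg by blast
      thus ?thesis using hSt A unfolding ext_V_def by simp
    next
      assume "\<exists>i\<in>Ms - {x}. A = {i}"
      then obtain i where i: "i \<in> Ms - {x}" "A = {i}" by blast
      have "ei i \<in> {..<k-1}" using i eiimg by blast
      thus ?thesis using hSg i unfolding ext_V_def by simp
    qed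
  qed
  have inj: "inj_on h R"
  proof (rule inj_onI)
    fix A B assume A: "A \<in> R" and B: "B \<in> R" and hAB: "h A = h B"
    show "A = B"
    proof (cases "x \<in> A")
      case xA: True
      hence AM: "A \<subseteq> Ms" using Rchar[OF A] by auto
      show ?thesis
      proof (cases "x \<in> B")
        case True
        hence BM: "B \<subseteq> Ms" using Rchar[OF B] by auto
        have "ei ` (Ms - A) = ei ` (Ms - B)" using hAB hSt xA True by simp
        moreover have "Ms - A \<subseteq> Ms - {x}" "Ms - B \<subseteq> Ms - {x}" using xA True by blast+
        ultimately have "Ms - A = Ms - B" using inj_on_image_eq_iff[OF eiinj] by blast
        thus ?thesis using AM BM by blast
      next
        case False
        thus ?thesis using hAB xA unfolding h_def by simp
      qed
    next
      case xA: False
      then obtain i where i: "i \<in> Ms - {x}" "A = {i}" using Rchar[OF A] by blast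
      show ?thesis
      proof (cases "x \<in> B")
        case True
        thus ?thesis using hAB xA unfolding h_def by simp
      next
        case False
        then obtain j where j: "j \<in> Ms - {x}" "B = {j}" using Rchar[OF B] by blast
        have "ei i = ei j" using hAB hSg i j by simp
        hence "i = j" using eiinj i j inj_onD by metis
        thus ?thesis using i j by simp
      qed
    qed
  qed
  have img: "h ` R = ext_V k"
  proof
    show "h ` R \<subseteq> ext_V k" using inR by blast
  next
    show "ext_V k \<subseteq> h ` R"
    proof
      fix y assume "y \<in> ext_V k"
      hence "y \<in> Inl ` {..<k-1} \<or> y \<in> Inr ` Pow {..<k-1}" unfolding ext_V_def by blast
      thus "y \<in> h ` R"
      proof
        assume "y \<in> Inl ` {..<k-1}"
        then obtain i where i: "i < k - 1" "y = Inl i" by blast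
        have ei_in: "e i \<in> Ms - {x}" using i eimg by blast
        hence "{e i} \<in> R" unfolding R_def by blast
        moreover have "h {e i} = y" using hSg[OF ei_in] eie[OF i(1)] i(2) by simp
        ultimately show ?thesis by blast
      next
        assume "y \<in> Inr ` Pow {..<k-1}"
        then obtain S where S: "S \<subseteq> {..<k-1}" "y = Inr S" by blast
        have eS: "e ` S \<subseteq> Ms - {x}" using S eimg by blast
        define A where "A = Ms - e ` S"
        have xA: "x \<in> A" using eS xM unfolding A_def by blast
        have "A \<in> R" unfolding R_def A_def using xA A_def by blast
        moreover have "Ms - A = e ` S" unfolding A_def using eS by blast
        hence "h A = Inr (ei ` e ` S)" using hSt[OF xA] by simp
        moreover have "ei ` e ` S = S"
        proof -
          have "ei ` e ` S = (\<lambda>i. ei (e i)) ` S" by (simp add: image_image)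
          also have "\<dots> = S" using eie S by (auto simp: image_iff) (metis lessThan_iff subsetD)
          finally show ?thesis .
        qed
        ultimately show ?thesis using S(2) by (metis image_eqI)
      qed
    qed
  qed
  have edges: "\<forall>A\<in>R. \<forall>B\<in>R. (A \<inter> B = {}) = ext_E k (h A) (h B)"
  proof (intro ballI)
    fix A B assume A: "A \<in> R" and B: "B \<in> R"
    have "ext_E k (h A) (h B) = ext_E_raw (h A) (h B)" using inR A B unfolding ext_E_def by simp
    moreover have "(A \<inter> B = {}) = ext_E_raw (h A) (h B)"
    proof (cases "x \<in> A")
      case xA: True
      hence AM: "A \<subseteq> Ms" using Rchar[OF A] by auto
      show ?thesis
      proof (cases "x \<in> B")
        case True
        thus ?thesis using xA hSt by auto
      next
        case False
        then obtain j where j: "j \<in> Ms - {x}" "B = {j}" using Rchar[OF B] by blast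
        have "Ms - A \<subseteq> Ms - {x}" using xA by blast
        hence "(ei j \<in> ei ` (Ms - A)) = (j \<in> Ms - A)"
          using inj_on_image_mem_iff[OF eiinj] j(1) by blast
        thus ?thesis using hSt[OF xA] hSg[OF j(1)] j by auto
      qed
    next
      case xA: False
      then obtain i where i: "i \<in> Ms - {x}" "A = {i}" using Rchar[OF A] by blast
      show ?thesis
      proof (cases "x \<in> B")
        case xB: True
        hence BM: "B \<subseteq> Ms" using Rchar[OF B] by auto
        have "Ms - B \<subseteq> Ms - {x}" using xB by blast
        hence "(ei i \<in> ei ` (Ms - B)) = (i \<in> Ms - B)"
          using inj_on_image_mem_iff[OF eiinj] i(1) by blast
        thus ?thesis using hSt[OF xB] hSg[OF i(1)] i by auto
      next
        case False
        then obtain j where j: "j \<in> Ms - {x}" "B = {j}" using Rchar[OF B] by blast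
        have "(ei i = ei j) = (i = j)" using eiinj i(1) j(1) inj_on_eq_iff by metis
        thus ?thesis using hSg[OF i(1)] hSg[OF j(1)] i j by auto
      qed
    qed
    ultimately show "(A \<inter> B = {}) = ext_E k (h A) (h B)" by simp
  qed
  have "bij_betw h R (ext_V k)" using inj img unfolding bij_betw_def by blast
  thus ?thesis using edges unfolding R_def by blast
qed

theorem corollary2p10:
  fixes V :: "'a set" and E :: "'a \<Rightarrow> 'a \<Rightarrow> bool" and k :: nat
  assumes "k \<ge> 2"
    and "simple_graph V E"
    and "twin_free V E"
    and "i_max V E = k"
  shows "card V \<le> 2 ^ (k - 1) + k - 1 \<and>
         (card V = 2 ^ (k - 1) + k - 1 \<longrightarrow> graph_iso V E (ext_V k) (ext_E k))"
proof -
  note sg = assms(2)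
  have finV: "finite V" using sg unfolding simple_graph_def by blast
  have Esym: "\<And>u v. E u v \<Longrightarrow> E v u" and Eirr: "\<And>v. \<not> E v v"
    using sg unfolding simple_graph_def by blast+
  define Ms where "Ms = {S. maximal_independent_set V E S}"
  define sig where "sig v = {M\<in>Ms. v \<in> M}" for v
  have MsV: "\<And>M. M \<in> Ms \<Longrightarrow> M \<subseteq> V"
    unfolding Ms_def maximal_independent_set_def independent_set_def by blast
  have "Ms \<subseteq> Pow V" using MsV by blast
  hence finMs: "finite Ms" using finV finite_subset by blast
  have cMs: "card Ms = k" using assms(4) unfolding i_max_def Ms_def by simp
  have edge: "\<And>u v. u \<in> V \<Longrightarrow> v \<in> V \<Longrightarrow> E u v = (sig u \<inter> sig v = {})"
  proof -
    fix u v assume u: "u \<in> V" and v: "v \<in> V"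
    show "E u v = (sig u \<inter> sig v = {})"
    proof
      assume Euv: "E u v"
      show "sig u \<inter> sig v = {}"
      proof (rule ccontr)
        assume "sig u \<inter> sig v \<noteq> {}"
        then obtain M where "M \<in> Ms" "u \<in> M" "v \<in> M" unfolding sig_def by blast
        thus False using Euv unfolding Ms_def maximal_independent_set_def independent_set_def by blast
      qed
    next
      assume dis: "sig u \<inter> sig v = {}"
      show "E u v"
      proof (rule ccontr)
        assume nE: "\<not> E u v"
        have "independent_set V E {u, v}"
          unfolding independent_set_def using u v nE Eirr Esym by blast
        then obtain M where "maximal_independent_set V E M" "{u,v} \<subseteq> M"
          using extend_mis[OF sg] by blast
        hence "M \<in> sig u \<inter> sig v" unfolding sig_def Ms_def by blast
        thus False using dis by blast
      qed
    qed
  qed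
  have signe: "\<And>v. v \<in> V \<Longrightarrow> sig v \<noteq> {}"
  proof -
    fix v assume v: "v \<in> V"
    have "independent_set V E {v}" unfolding independent_set_def using v Eirr by blast
    then obtain M where "maximal_independent_set V E M" "{v} \<subseteq> M"
      using extend_mis[OF sg] by blast
    hence "M \<in> sig v" unfolding sig_def Ms_def by blast
    thus "sig v \<noteq> {}" by blast
  qed
  have inj: "inj_on sig V"
  proof (rule inj_onI)
    fix u v assume u: "u \<in> V" and v: "v \<in> V" and eq: "sig u = sig v"
    have "\<forall>w\<in>V. E u w = E v w"
    proof
      fix w assume w: "w \<in> V"
      show "E u w = E v w" using edge[OF u w] edge[OF v w] eq by simp
    qed
    hence "nbhd V E u = nbhd V E v"
      unfolding nbhd_def by blast
    thus "u = v" using assms(3) u v unfolding twin_free_def by blast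
  qed
  interpret H: hfam Ms "sig ` V"
  proof
    show "finite Ms" by (rule finMs)
  next
    fix A assume "A \<in> sig ` V"
    thus "A \<subseteq> Ms" unfolding sig_def by blast
  next
    show "{} \<notin> sig ` V" using signe by (metis imageE)
  next
    fix I assume IF: "I \<subseteq> sig ` V" and pw: "\<forall>A\<in>I. \<forall>B\<in>I. A \<inter> B \<noteq> {}"
    define J where "J = {v\<in>V. sig v \<in> I}"
    have "independent_set V E J"
      unfolding independent_set_def
    proof (intro conjI ballI)
      show "J \<subseteq> V" unfolding J_def by blast
    next
      fix u v assume "u \<in> J" "v \<in> J"
      hence "u \<in> V" "v \<in> V" "sig u \<in> I" "sig v \<in> I" unfolding J_def by blast+
      hence "sig u \<inter> sig v \<noteq> {}" using pw by blast
      thus "\<not> E u v" using edge[OF \<open>u \<in> V\<close> \<open>v \<in> V\<close>] by simp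
    qed
    then obtain M where M: "maximal_independent_set V E M" "J \<subseteq> M"
      using extend_mis[OF sg] by blast
    have "M \<in> Ms" using M(1) unfolding Ms_def by blast
    moreover have "\<forall>A\<in>I. M \<in> A"
    proof
      fix A assume "A \<in> I"
      then obtain v where v: "v \<in> V" "A = sig v" using IF by blast
      hence "v \<in> J" using \<open>A \<in> I\<close> unfolding J_def by blast
      thus "M \<in> A" using v M(2) \<open>M \<in> Ms\<close> unfolding sig_def by blast
    qed
    ultimately show "\<exists>u\<in>Ms. \<forall>A\<in>I. u \<in> A" by blast
  qed
  have "Ms \<noteq> {}" proof assume "Ms = {}" hence "card Ms = 0" by simp thus False using cMs assms(1) by simp qed
  then obtain x0 where x0: "x0 \<in> Ms" by blast
  have cV: "card (sig ` V) = card V" using inj by (rule card_image)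
  have kk: "2 ^ (k - 1) + k - 1 = 2 ^ (card Ms - 1) + (card Ms - 1)" using cMs assms(1) by simp
  have part1: "card V \<le> 2 ^ (k - 1) + k - 1"
    using H.bound_complete[OF x0] cV kk by simp
  moreover have "graph_iso V E (ext_V k) (ext_E k)" if eqV: "card V = 2 ^ (k - 1) + k - 1"
  proof -
    have cF: "card (sig ` V) = 2 ^ (card Ms - 1) + (card Ms - 1)" using eqV cV kk by simp
    have "\<exists>x\<in>Ms. sig ` V = {A. A \<subseteq> Ms \<and> x \<in> A} \<union> (\<lambda>i. {i}) ` (Ms - {x})"
      by (rule H.extremal[OF x0 cF])
    then obtain x where x: "x \<in> Ms"
      and FE: "sig ` V = {A. A \<subseteq> Ms \<and> x \<in> A} \<union> (\<lambda>i. {i}) ` (Ms - {x})"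
      by (elim bexE) (rule that)
    obtain h where h: "bij_betw h (sig ` V) (ext_V k)"
      and hE: "\<forall>A\<in>sig ` V. \<forall>B\<in>sig ` V. (A \<inter> B = {}) = ext_E k (h A) (h B)"
      using iso_build[OF finMs x cMs] unfolding FE[symmetric] by blast
    have "bij_betw sig V (sig ` V)" using inj by (simp add: bij_betw_def)
    hence bij: "bij_betw (h \<circ> sig) V (ext_V k)" using h by (rule bij_betw_trans)
    have "\<forall>u\<in>V. \<forall>v\<in>V. E u v = ext_E k ((h \<circ> sig) u) ((h \<circ> sig) v)"
    proof (intro ballI)
      fix u v assume u: "u \<in> V" and v: "v \<in> V"
      have "sig u \<in> sig ` V" "sig v \<in> sig ` V" using u v by simp_all
      hence "(sig u \<inter> sig v = {}) = ext_E k (h (sig u)) (h (sig v))" using hE by blast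
      thus "E u v = ext_E k ((h \<circ> sig) u) ((h \<circ> sig) v)" using edge[OF u v] by simp
    qed
    thus ?thesis unfolding graph_iso_def using bij by blast
  qed
  ultimately show ?thesis by blast
qed

end
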